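(* Consider the flat-pricing market described in the context and assume $\eta<\big(\kappa_{\mathrm{avg}}\,\Phi_{\max}^{1-\theta}\big)^{-1}$. Treat $\kappa_{\mathrm{avg}}$ and $\kappa_{\mathrm{peak}}$ as independent variable parameters, with all other parameters fixed. (i) In the opt-saturated case (i.e., when $R'(p_0)<0$), as $\kappa_{\mathrm{peak}}$ decreases, the equilibrium price $p^\star$ decreases, so the net-utility $\Phi^\theta-p^\star$ of every subscriber increases, and the equilibrium revenue $R(p^\star)$ increases (more precisely $\partial p^\star/\partial\kappa_{\mathrm{peak}}>0$ and $\partial R(p^\star)/\partial\kappa_{\mathrm{peak}}<0$); consequently the user surplus and the social welfare increase. (ii) In the opt-unsaturated case (i.e., when $R'(p_0)>0$), as $\kappa_{\mathrm{avg}}$ decreases, the equilibrium price decreases, so the net-utility of every subscriber increases, and the maximal revenue $\max_{p\in\mathcal P}R(p)$ increases; consequently the user surplus and the social welfare increase.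
   Context: Market model (single cell). There are $\hat N$ users (treated as a continuum of mass $\hat N$) in one base-station cell with capacity $C_{3g}>0$ (traffic volume per time slot), and time slots $t\in T=\{1,\dots,|T|\}$. Each user's daily traffic demand $\Phi$ is random with density $f_\Phi(x)=x^{-\sigma}/Z$ for $0\le x\le\Phi_{\max}$, where $0<\sigma<1$ and $Z=\Phi_{\max}^{1-\sigma}/(1-\sigma)$. All users share a temporal preference $w(t)\ge 0$ with $\sum_{t\in T}w(t)=1$; a user with demand $\Phi$ has per-slot demand $\phi(t)=w(t)\Phi$. The willingness to pay is $\gamma(t)=w(t)^{1-\theta}$ with price sensitivity $\theta\in(0,1)$; a user sending volumes $x(t)\le\phi(t)$ and paying $m$ gets net-utility $\sum_{t}\gamma(t)x(t)^\theta-m$. Offloading indicators: constants $\kappa_{\mathrm{avg}},\kappa_{\mathrm{peak}}\in(0,1]$ (independent of price) such that, if $X_{\rm tot}=\sum_t X(t)$ is the total (cellular+WiFi) traffic sent in the cell in a day, then the total daily cellular (3G) traffic is $\kappa_{\mathrm{avg}}X_{\rm tot}$ and the peak per-slot cellular traffic is $\kappa_{\mathrm{peak}}X_{\rm tot}$. Flat pricing with fee $p\ge0$: a user subscribes iff its net-utility $\Phi^\theta-p$ is positive, i.e. iff $\Phi>p^{1/\theta}$, and a subscriber sends its whole demand, $x(t)=\phi(t)$. Let $p_{\max}=\Phi_{\max}^\theta$ (no subscribers for $p\ge p_{\max}$). The provider's revenue (income minus linear cellular cost with coefficient $\eta>0$ per unit of cellular traffic) is, for $0\le p<p_{\max}$,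 $$R(p)=\hat N\int_{p^{1/\theta}}^{\Phi_{\max}}\big(p-\eta\kappa_{\mathrm{avg}}\Phi\big)f_\Phi(\Phi)\,d\Phi,$$ and $R(p)=0$ for $p\ge p_{\max}$. The peak cellular traffic is $A(p)=\kappa_{\mathrm{peak}}\hat N\int_{p^{1/\theta}}^{\Phi_{\max}}\Phi f_\Phi(\Phi)\,d\Phi$. Feasible price set: $\mathcal P=\{p: R(p)>0,\ A(p)\le C_{3g}\}$; threshold price $p_0=\inf\mathcal P$. An equilibrium price is any $p^\star\in\arg\max_{p\in\mathcal P}R(p)$ (it is unique under the stated hypothesis). The network is saturated at $p$ if $A(p)=C_{3g}$; for a unique equilibrium price $p^\star$, the network is called opt-saturated if it is saturated at $p^\star$ and opt-unsaturated otherwise. User surplus is the total net-utility of subscribers; social welfare is user surplus plus provider revenue. *)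

theory Defs
  imports "HOL-Analysis.Analysis"
begin

text \<open>Flat-pricing market in a single cell. Parameters:
  N = mass of users, sig = sigma, M = Phi_max, th = theta, eta = cost coefficient,
  ka = kappa_avg, kp = kappa_peak, C = capacity C_3g.\<close>

definition dens :: "real \<Rightarrow> real \<Rightarrow> real \<Rightarrow> real" where
  "dens sig M x = x powr (- sig) / (M powr (1 - sig) / (1 - sig))"

definition pmax :: "real \<Rightarrow> real \<Rightarrow> real" where
  "pmax th M = M powr th"

definition Rev :: "real \<Rightarrow> real \<Rightarrow> real \<Rightarrow> real \<Rightarrow> real \<Rightarrow> real \<Rightarrow> real \<Rightarrow> real" where
  "Rev N sig M th eta ka p =
     (if p < pmax th M
      then N * integral {p powr (1 / th)..M} (\<lambda>x. (p - eta * ka * x) * dens sig M x)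
      else 0)"

definition Peak :: "real \<Rightarrow> real \<Rightarrow> real \<Rightarrow> real \<Rightarrow> real \<Rightarrow> real \<Rightarrow> real" where
  "Peak N sig M th kp p =
     (if p < pmax th M
      then kp * N * integral {p powr (1 / th)..M} (\<lambda>x. x * dens sig M x)
      else 0)"

definition USurp :: "real \<Rightarrow> real \<Rightarrow> real \<Rightarrow> real \<Rightarrow> real \<Rightarrow> real" where
  "USurp N sig M th p =
     (if p < pmax th M
      then N * integral {p powr (1 / th)..M} (\<lambda>x. (x powr th - p) * dens sig M x)
      else 0)"

definition SWelf :: "real \<Rightarrow> real \<Rightarrow> real \<Rightarrow> real \<Rightarrow> real \<Rightarrow> real \<Rightarrow> real \<Rightarrow> real" where
  "SWelf N sig M th eta ka p = USurp N sig M th p + Rev N sig M th eta ka p"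

definition Feas :: "real \<Rightarrow> real \<Rightarrow> real \<Rightarrow> real \<Rightarrow> real \<Rightarrow> real \<Rightarrow> real \<Rightarrow> real \<Rightarrow> real set" where
  "Feas N sig M th eta C ka kp =
     {p. 0 \<le> p \<and> Rev N sig M th eta ka p > 0 \<and> Peak N sig M th kp p \<le> C}"

definition p0 :: "real \<Rightarrow> real \<Rightarrow> real \<Rightarrow> real \<Rightarrow> real \<Rightarrow> real \<Rightarrow> real \<Rightarrow> real \<Rightarrow> real" where
  "p0 N sig M th eta C ka kp = Inf (Feas N sig M th eta C ka kp)"

definition peq :: "real \<Rightarrow> real \<Rightarrow> real \<Rightarrow> real \<Rightarrow> real \<Rightarrow> real \<Rightarrow> real \<Rightarrow> real \<Rightarrow> real" where
  "peq N sig M th eta C ka kp =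
     (THE p. p \<in> Feas N sig M th eta C ka kp \<and>
        (\<forall>q \<in> Feas N sig M th eta C ka kp. Rev N sig M th eta ka q \<le> Rev N sig M th eta ka p))"

definition MaxRev :: "real \<Rightarrow> real \<Rightarrow> real \<Rightarrow> real \<Rightarrow> real \<Rightarrow> real \<Rightarrow> real \<Rightarrow> real \<Rightarrow> real" where
  "MaxRev N sig M th eta C ka kp =
     Sup (Rev N sig M th eta ka ` Feas N sig M th eta C ka kp)"

end

theory Submission
  imports Defs
begin


lemma int_pow:
  fixes a u M sig :: real
  assumes u: "0 \<le> u" "u \<le> M" and a: "a \<ge> 0" and sig: "0 < sig" "sig < 1"
  shows "((\<lambda>x. x powr a * x powr (-sig)) has_integral
           (M powr (a+1-sig) - u powr (a+1-sig))/(a+1-sig)) {u..M}"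
proof -
  have e: "a + 1 - sig > 0" using a sig by simp
  have "((\<lambda>x. x powr a * x powr (-sig)) has_integral
           ((\<lambda>x. x powr (a+1-sig)/(a+1-sig)) M - (\<lambda>x. x powr (a+1-sig)/(a+1-sig)) u)) {u..M}"
  proof (rule fundamental_theorem_of_calculus_interior)
    show "u \<le> M" by fact
    show "continuous_on {u..M} (\<lambda>x. x powr (a+1-sig)/(a+1-sig))"
      using u e by (intro continuous_intros continuous_on_powr') auto
    fix x assume x: "x \<in> {u<..<M}"
    hence xp: "x > 0" using u by auto
    have "((\<lambda>x. x powr (a+1-sig)/(a+1-sig)) has_real_derivative
           ((a+1-sig) * x powr (a+1-sig-1))/(a+1-sig)) (at x)"
      using has_real_derivative_powr[OF xp, of "a+1-sig"] by (rule DERIV_cdivide)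
    moreover have "((a+1-sig) * x powr (a+1-sig-1))/(a+1-sig) = x powr a * x powr (-sig)"
      using e xp by (simp add: powr_add[symmetric])
    ultimately show "((\<lambda>x. x powr (a+1-sig)/(a+1-sig)) has_vector_derivative x powr a * x powr (-sig)) (at x)"
      by (simp add: has_real_derivative_iff_has_vector_derivative)
  qed
  thus ?thesis by (simp add: diff_divide_distrib)
qed




lemma int_dens:
  fixes a u M sig :: real
  assumes u: "0 \<le> u" "u \<le> M" and a: "a \<ge> 0" and sig: "0 < sig" "sig < 1"
  shows "((\<lambda>x. x powr a * dens sig M x) has_integral
           (1-sig) / M powr (1-sig) * ((M powr (a+1-sig) - u powr (a+1-sig))/(a+1-sig))) {u..M}"
proof -
  have "((\<lambda>x. (1-sig) / M powr (1-sig) * (x powr a * x powr (-sig))) has_integral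
           (1-sig) / M powr (1-sig) * ((M powr (a+1-sig) - u powr (a+1-sig))/(a+1-sig))) {u..M}"
    by (intro has_integral_mult_right int_pow assms)
  thus ?thesis by (simp add: dens_def field_simps)
qed

lemma dens0: "x powr 0 * dens sig M x = dens sig M x"
  by (simp add: dens_def)
lemma dens1: "x \<ge> 0 \<Longrightarrow> x powr 1 * dens sig M x = x * dens sig M x"
  by simp

definition RC where "RC N sig M th eta k p =
  N * (p * (M powr (1-sig) - p powr ((1-sig)/th))
     - eta*k*(1-sig)/(2-sig) * (M powr (2-sig) - p powr ((2-sig)/th))) / M powr (1-sig)"
definition PC where "PC N sig M th k p =
  k * N * (1-sig)/(2-sig) * (M powr (2-sig) - p powr ((2-sig)/th)) / M powr (1-sig)"
definition UC where "UC N sig M th p =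
  N * ((1-sig)/(th+1-sig) * (M powr (th+1-sig) - p powr ((th+1-sig)/th))
     - p * (M powr (1-sig) - p powr ((1-sig)/th))) / M powr (1-sig)"

lemma u_bounds:
  fixes p M th :: real
  assumes "0 \<le> p" "p < pmax th M" "M > 0" "th > 0"
  shows "0 \<le> p powr (1/th)" "p powr (1/th) < M"
proof -
  show "0 \<le> p powr (1/th)" by simp
  have "p powr (1/th) < (M powr th) powr (1/th)"
    using assms by (intro powr_less_mono2) (auto simp: pmax_def)
  thus "p powr (1/th) < M" using assms by (simp add: powr_powr)
qed

lemma alg1: "(s::real) \<noteq> 0 \<Longrightarrow> Ms \<noteq> 0 \<Longrightarrow> t \<noteq> 0 \<Longrightarrow>
  p * (s / Ms * ((Ms - a) / s)) - c * (s / Ms * ((B - b) / t)) = (p * (Ms - a) - c * s / t * (B - b)) / Ms"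
  by (simp add: field_simps)
lemma alg2: "(s::real) \<noteq> 0 \<Longrightarrow> Ms \<noteq> 0 \<Longrightarrow> t \<noteq> 0 \<Longrightarrow>
  (s / Ms * ((B-b)/t)) = s/t*(B-b)/Ms"
  by (simp add: field_simps)
lemma alg3: "(s::real) \<noteq> 0 \<Longrightarrow> Ms \<noteq> 0 \<Longrightarrow> t \<noteq> 0 \<Longrightarrow>
  (s / Ms * ((B-b)/t)) - p * (s / Ms * ((Ms - a)/s)) = (s/t*(B-b) - p*(Ms-a))/Ms"
  by (simp add: field_simps)

context
  fixes N sig M th :: real
  assumes sig: "0 < sig" "sig < 1" and th: "0 < th" "th < 1" and M: "M > 0"
begin

lemma nums: "(0::real)+1-sig = 1-sig" "(1::real)+1-sig = 2-sig" by simp_all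

lemma Rev_closed:
  assumes "0 \<le> p" "p < pmax th M"
  shows "Rev N sig M th eta k p = RC N sig M th eta k p"
proof -
  define u where "u = p powr (1/th)"
  have u: "0 \<le> u" "u \<le> M" using u_bounds[OF assms M th(1)] by (auto simp: u_def)
  have "((\<lambda>x. p * (x powr 0 * dens sig M x) - eta*k * (x powr 1 * dens sig M x)) has_integral
      p * ((1-sig) / M powr (1-sig) * ((M powr (0+1-sig) - u powr (0+1-sig))/(0+1-sig)))
      - eta*k*((1-sig) / M powr (1-sig) * ((M powr (1+1-sig) - u powr (1+1-sig))/(1+1-sig)))) {u..M}"
    by (intro has_integral_diff has_integral_mult_right int_dens u sig) auto
  moreover have "\<And>x. x \<in> {u..M} \<Longrightarrow> p * (x powr 0 * dens sig M x) - eta*k * (x powr 1 * dens sig M x)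
      = (p - eta*k*x) * dens sig M x"
    using u by (simp only: dens0 dens1) (auto simp: algebra_simps)
  ultimately have I: "((\<lambda>x. (p - eta*k*x) * dens sig M x) has_integral
      p * ((1-sig) / M powr (1-sig) * ((M powr (0+1-sig) - u powr (0+1-sig))/(0+1-sig)))
      - eta*k*((1-sig) / M powr (1-sig) * ((M powr (1+1-sig) - u powr (1+1-sig))/(1+1-sig)))) {u..M}"
    using has_integral_cong by (smt (verit))
  have e1: "u powr (1-sig) = p powr ((1-sig)/th)" "u powr (2-sig) = p powr ((2-sig)/th)"
    by (simp_all add: u_def powr_powr)
  have val: "p * ((1-sig) / M powr (1-sig) * ((M powr (0+1-sig) - u powr (0+1-sig))/(0+1-sig)))
      - eta*k*((1-sig) / M powr (1-sig) * ((M powr (1+1-sig) - u powr (1+1-sig))/(1+1-sig)))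
      = (p * (M powr (1-sig) - p powr ((1-sig)/th))
     - eta*k*(1-sig)/(2-sig) * (M powr (2-sig) - p powr ((2-sig)/th))) / M powr (1-sig)"
    unfolding e1[symmetric] using sig M by (simp only: nums) (intro alg1 alg2; simp)
  show ?thesis using assms integral_unique[OF I, unfolded val]
    unfolding Rev_def RC_def u_def[symmetric] by simp
qed

lemma Peak_closed:
  assumes "0 \<le> p" "p < pmax th M"
  shows "Peak N sig M th k p = PC N sig M th k p"
proof -
  define u where "u = p powr (1/th)"
  have u: "0 \<le> u" "u \<le> M" using u_bounds[OF assms M th(1)] by (auto simp: u_def)
  have "((\<lambda>x. x powr 1 * dens sig M x) has_integral
      ((1-sig) / M powr (1-sig) * ((M powr (1+1-sig) - u powr (1+1-sig))/(1+1-sig)))) {u..M}"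
    by (intro int_dens u sig) auto
  moreover have "\<And>x. x \<in> {u..M} \<Longrightarrow> x powr 1 * dens sig M x = x * dens sig M x"
    using u by auto
  ultimately have I: "((\<lambda>x. x * dens sig M x) has_integral
      ((1-sig) / M powr (1-sig) * ((M powr (1+1-sig) - u powr (1+1-sig))/(1+1-sig)))) {u..M}"
    using has_integral_cong by (smt (verit))
  have e1: "u powr (2-sig) = p powr ((2-sig)/th)"
    by (simp_all add: u_def powr_powr)
  have val: "((1-sig) / M powr (1-sig) * ((M powr (1+1-sig) - u powr (1+1-sig))/(1+1-sig)))
     = (1-sig)/(2-sig) * (M powr (2-sig) - p powr ((2-sig)/th)) / M powr (1-sig)"
    unfolding e1[symmetric] using sig M by (simp only: nums) (intro alg1 alg2; simp)
  show ?thesis using assms integral_unique[OF I, unfolded val]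
    unfolding Peak_def PC_def u_def[symmetric] by simp
qed

lemma USurp_closed:
  assumes "0 \<le> p" "p < pmax th M"
  shows "USurp N sig M th p = UC N sig M th p"
proof -
  define u where "u = p powr (1/th)"
  have u: "0 \<le> u" "u \<le> M" using u_bounds[OF assms M th(1)] by (auto simp: u_def)
  have "((\<lambda>x. (x powr th * dens sig M x) - p * (x powr 0 * dens sig M x)) has_integral
      ((1-sig) / M powr (1-sig) * ((M powr (th+1-sig) - u powr (th+1-sig))/(th+1-sig)))
      - p * ((1-sig) / M powr (1-sig) * ((M powr (0+1-sig) - u powr (0+1-sig))/(0+1-sig)))) {u..M}"
    using th by (intro has_integral_diff has_integral_mult_right int_dens u sig) auto
  moreover have "\<And>x. x \<in> {u..M} \<Longrightarrow> (x powr th * dens sig M x) - p * (x powr 0 * dens sig M x)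
      = (x powr th - p) * dens sig M x"
    using u by (simp only: dens0) (auto simp: algebra_simps)
  ultimately have I: "((\<lambda>x. (x powr th - p) * dens sig M x) has_integral
      ((1-sig) / M powr (1-sig) * ((M powr (th+1-sig) - u powr (th+1-sig))/(th+1-sig)))
      - p * ((1-sig) / M powr (1-sig) * ((M powr (0+1-sig) - u powr (0+1-sig))/(0+1-sig)))) {u..M}"
    using has_integral_cong by (smt (verit))
  have e1: "u powr (1-sig) = p powr ((1-sig)/th)" "u powr (th+1-sig) = p powr ((th+1-sig)/th)"
    by (simp_all add: u_def powr_powr)
  have val: "((1-sig) / M powr (1-sig) * ((M powr (th+1-sig) - u powr (th+1-sig))/(th+1-sig)))
      - p * ((1-sig) / M powr (1-sig) * ((M powr (0+1-sig) - u powr (0+1-sig))/(0+1-sig)))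
     = ((1-sig)/(th+1-sig) * (M powr (th+1-sig) - p powr ((th+1-sig)/th))
     - p * (M powr (1-sig) - p powr ((1-sig)/th))) / M powr (1-sig)"
    unfolding e1[symmetric] using sig M th by (simp only: nums) (intro alg3; simp)
  show ?thesis using assms integral_unique[OF I, unfolded val]
    unfolding USurp_def UC_def u_def[symmetric] by simp
qed

end



definition gf where "gf sig M th eta k v =
  th * M powr (1-sig) - (th + 1 - sig) * v + eta*k*(1-sig) * v powr ((2-sig-th)/(1-sig))"

context
  fixes N sig M th :: real
  assumes sig: "0 < sig" "sig < 1" and th: "0 < th" "th < 1" and M: "M > 0"
begin

lemma RC_deriv:
  assumes p: "p > 0"
  shows "(RC N sig M th eta k has_real_derivative
          N / (th * M powr (1-sig)) * gf sig M th eta k (p powr ((1-sig)/th))) (at p)"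
proof -
  have d1: "((\<lambda>p. p powr ((1-sig)/th)) has_real_derivative ((1-sig)/th) * p powr ((1-sig)/th - 1)) (at p)"
    by (rule has_real_derivative_powr[OF p])
  have d2: "((\<lambda>p. p powr ((2-sig)/th)) has_real_derivative ((2-sig)/th) * p powr ((2-sig)/th - 1)) (at p)"
    by (rule has_real_derivative_powr[OF p])
  have D: "(RC N sig M th eta k has_real_derivative
     N * ((1 * (M powr (1-sig) - p powr ((1-sig)/th)) + (0 - ((1-sig)/th) * p powr ((1-sig)/th - 1)) * p)
      - eta*k*(1-sig)/(2-sig) * (0 - ((2-sig)/th) * p powr ((2-sig)/th - 1))) / M powr (1-sig)) (at p)"
    unfolding RC_def[abs_def]
    by (intro DERIV_cdivide DERIV_cmult DERIV_diff DERIV_mult DERIV_ident DERIV_const d1 d2)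
  have e1: "p * p powr ((1-sig)/th - 1) = p powr ((1-sig)/th)"
    using p by (simp add: powr_diff)
  have e2: "(p powr ((1-sig)/th)) powr ((2-sig-th)/(1-sig)) = p powr ((2-sig)/th - 1)"
  proof -
    have "(1-sig)/th * ((2-sig-th)/(1-sig)) = (2-sig)/th - 1"
      using sig th by (simp add: field_simps)
    thus ?thesis by (simp add: powr_powr)
  qed
  have "N * ((1 * (M powr (1-sig) - p powr ((1-sig)/th)) + (0 - ((1-sig)/th) * p powr ((1-sig)/th - 1)) * p)
      - eta*k*(1-sig)/(2-sig) * (0 - ((2-sig)/th) * p powr ((2-sig)/th - 1))) / M powr (1-sig)
      = N / (th * M powr (1-sig)) * gf sig M th eta k (p powr ((1-sig)/th))"
    unfolding gf_def e2
    using sig th M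
    by (simp add: field_simps e1[symmetric])
  with D show ?thesis by simp
qed

end



lemma gf_neg:
  fixes sig M th eta k v1 v v2 :: real
  assumes sig: "0 < sig" "sig < 1" and th: "0 < th" "th < 1"
    and ek: "eta \<ge> 0" "k \<ge> 0"
    and v: "0 < v1" "v1 < v" "v < v2"
    and g1: "gf sig M th eta k v1 \<le> 0" and g2: "gf sig M th eta k v2 < 0"
  shows "gf sig M th eta k v < 0"
proof -
  define r where "r = (2-sig-th)/(1-sig)"
  have r: "r \<ge> 1" using sig th by (simp add: r_def field_simps)
  define t where "t = (v - v1)/(v2 - v1)"
  have t: "0 < t" "t < 1" using v by (auto simp: t_def field_simps)
  have tt: "t * (v2 - v1) = v - v1" unfolding t_def using v by simp
  have "(1 - t) * v1 + t * v2 = v1 + t * (v2 - v1)" by algebra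
  hence vt: "v = (1 - t) * v1 + t * v2" using tt by linarith
  have cv: "v powr r \<le> (1 - t) * v1 powr r + t * v2 powr r"
  proof -
    have "((1-t) *\<^sub>R v1 + t *\<^sub>R v2) = v" using vt by simp
    moreover have "(\<lambda>x. x powr r) ((1 - t) *\<^sub>R v1 + t *\<^sub>R v2) \<le> (1 - t) * v1 powr r + t * v2 powr r"
      using convex_onD[OF powr_convex[OF r], of t v1 v2] t v by simp
    ultimately show ?thesis by simp
  qed
  have c0: "eta*k*(1-sig) \<ge> 0" using ek sig by simp
  have "gf sig M th eta k v \<le> (1-t) * gf sig M th eta k v1 + t * gf sig M th eta k v2"
  proof -
    have "eta*k*(1-sig) * v powr r \<le> eta*k*(1-sig) * ((1 - t) * v1 powr r + t * v2 powr r)"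
      using mult_left_mono[OF cv c0] .
    moreover have "th*M powr (1-sig) - (th+1-sig) * v = (1-t)*(th*M powr (1-sig) - (th+1-sig) * v1) + t*(th*M powr (1-sig) - (th+1-sig) * v2)"
      by (subst vt) (simp add: algebra_simps)
    moreover have "(1-t) * gf sig M th eta k v1 + t * gf sig M th eta k v2 = (1-t)*(th*M powr (1-sig) - (th+1-sig) * v1) + t*(th*M powr (1-sig) - (th+1-sig) * v2) + eta*k*(1-sig) * ((1 - t) * v1 powr r + t * v2 powr r)"
      unfolding gf_def r_def[symmetric] by (simp add: algebra_simps)
    moreover have "gf sig M th eta k v = th*M powr (1-sig) - (th+1-sig) * v + eta*k*(1-sig) * v powr r"
      unfolding gf_def r_def[symmetric] by simp
    ultimately show ?thesis by linarith
  qed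
  also have "\<dots> < 0"
  proof -
    have "(1-t) * gf sig M th eta k v1 \<le> 0" using t g1 by (simp add: mult_nonneg_nonpos)
    moreover have "t * gf sig M th eta k v2 < 0" using t g2 by (simp add: mult_pos_neg)
    ultimately show ?thesis by simp
  qed
  finally show ?thesis .
qed

lemma gf_Mval:
  fixes sig M th eta k :: real
  assumes sig: "0 < sig" "sig < 1" and th: "0 < th" "th < 1" and M: "M > 0"
    and ek: "eta > 0" "k > 0" and bound: "eta < 1 / (k * M powr (1 - th))"
  shows "gf sig M th eta k (M powr (1-sig)) < 0"
proof -
  have e: "(M powr (1-sig)) powr ((2-sig-th)/(1-sig)) = M powr (1-sig) * M powr (1-th)"
  proof -
    have "(1-sig) * ((2-sig-th)/(1-sig)) = (1-sig) + (1-th)" using sig by (simp add: field_simps)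
    thus ?thesis by (simp add: powr_powr powr_add[symmetric])
  qed
  have b: "eta * k * M powr (1-th) < 1"
    using bound ek M by (simp add: field_simps)
  have "gf sig M th eta k (M powr (1-sig)) = (1-sig) * M powr (1-sig) * (eta * k * M powr (1-th) - 1)"
    unfolding gf_def e by (simp add: algebra_simps)
  also have "\<dots> < 0" using sig M b by (intro mult_pos_neg) auto
  finally show ?thesis .
qed

lemma gf_zero: "(th::real) > 0 \<Longrightarrow> M > 0 \<Longrightarrow> gf sig M th eta k 0 > 0"
  using mult_pos_pos[of th "M powr (1-sig)"] by (simp add: gf_def)

lemma gf_cont:
  fixes sig M th eta k :: real
  assumes sig: "0 < sig" "sig < 1" and th: "0 < th" "th < 1"
  shows "continuous_on {0..} (gf sig M th eta k)"
proof -
  have "(2-sig-th)/(1-sig) > 0" using sig th by simp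
  hence c: "continuous_on {0..} (\<lambda>v::real. v powr ((2-sig-th)/(1-sig)))"
    by (intro continuous_on_powr' continuous_on_id continuous_on_const) auto
  show ?thesis unfolding gf_def[abs_def]
    by (intro continuous_on_add continuous_on_diff continuous_on_mult continuous_on_const continuous_on_id c)
qed

lemma gf_mono_k:
  fixes sig M th eta k k' v :: real
  assumes sig: "0 < sig" "sig < 1" and "eta > 0" "k < k'" "v > 0"
  shows "gf sig M th eta k v < gf sig M th eta k' v"
proof -
  have "eta * (1-sig) * v powr ((2-sig-th)/(1-sig)) > 0" using assms by simp
  hence "k * (eta * (1-sig) * v powr ((2-sig-th)/(1-sig))) < k' * (eta * (1-sig) * v powr ((2-sig-th)/(1-sig)))"
    using assms(4) by (rule mult_strict_right_mono[rotated])
  thus ?thesis unfolding gf_def by (simp add: algebra_simps)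
qed




lemma algU: "(w::real) \<noteq> 0 \<Longrightarrow> Ms \<noteq> 0 \<Longrightarrow> t \<noteq> 0 \<Longrightarrow>
   N * (s / w * (0 - w / t * X) - (1 * (Ms - X) + - (s / t) * X)) / Ms = - N * (Ms - X) / Ms"
  by (simp add: field_simps)

context
  fixes N sig M th eta :: real
  assumes sig: "0 < sig" "sig < 1" and th: "0 < th" "th < 1" and M: "M > 0"
    and N: "N > 0" and eta: "eta > 0"
begin

lemma pm_pos: "pmax th M > 0" using M by (simp add: pmax_def)

lemma v_lt_Ms: "0 \<le> p \<Longrightarrow> p < pmax th M \<Longrightarrow> p powr ((1-sig)/th) < M powr (1-sig)"
proof -
  assume "0 \<le> p" "p < pmax th M"
  hence "p powr ((1-sig)/th) < (M powr th) powr ((1-sig)/th)"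
    using sig th by (intro powr_less_mono2) (auto simp: pmax_def)
  thus ?thesis using th by (simp add: powr_powr)
qed

lemma v_lt_Ms2: "0 \<le> p \<Longrightarrow> p < pmax th M \<Longrightarrow> p powr ((2-sig)/th) < M powr (2-sig)"
proof -
  assume "0 \<le> p" "p < pmax th M"
  hence "p powr ((2-sig)/th) < (M powr th) powr ((2-sig)/th)"
    using sig th by (intro powr_less_mono2) (auto simp: pmax_def)
  thus ?thesis using th by (simp add: powr_powr)
qed

lemma RC_cont: "continuous_on {0..} (RC N sig M th eta k)"
proof -
  have c1: "continuous_on {0..} (\<lambda>v::real. v powr ((1-sig)/th))"
    using sig th by (intro continuous_on_powr' continuous_on_id continuous_on_const) auto
  have c2: "continuous_on {0..} (\<lambda>v::real. v powr ((2-sig)/th))"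
    using sig th by (intro continuous_on_powr' continuous_on_id continuous_on_const) auto
  show ?thesis unfolding RC_def[abs_def]
    by (intro continuous_on_add continuous_on_diff continuous_on_mult continuous_on_divide
        continuous_on_const continuous_on_id c1 c2) (use M in auto)
qed

lemma UC_cont: "continuous_on {0..} (UC N sig M th)"
proof -
  have c1: "continuous_on {0..} (\<lambda>v::real. v powr ((1-sig)/th))"
    using sig th by (intro continuous_on_powr' continuous_on_id continuous_on_const) auto
  have c2: "continuous_on {0..} (\<lambda>v::real. v powr ((th+1-sig)/th))"
    using sig th by (intro continuous_on_powr' continuous_on_id continuous_on_const) auto
  show ?thesis unfolding UC_def[abs_def]
    by (intro continuous_on_add continuous_on_diff continuous_on_mult continuous_on_divide
        continuous_on_const continuous_on_id c1 c2) (use M in auto)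
qed

lemma RC_zero: "k > 0 \<Longrightarrow> RC N sig M th eta k 0 < 0"
proof -
  assume k: "k > 0"
  have "N * (eta*k*(1-sig)/(2-sig) * M powr (2-sig)) / M powr (1-sig) > 0"
    using k sig eta M N by (intro divide_pos_pos mult_pos_pos) auto
  moreover have "RC N sig M th eta k 0 = - (N * (eta*k*(1-sig)/(2-sig) * M powr (2-sig)) / M powr (1-sig))"
    unfolding RC_def using sig th by simp
  ultimately show ?thesis by linarith
qed

lemma RC_k_mono:
  assumes "0 \<le> p" "p < pmax th M" "k' < k"
  shows "RC N sig M th eta k p < RC N sig M th eta k' p"
proof -
  have a: "M powr (2-sig) - p powr ((2-sig)/th) > 0" using v_lt_Ms2 assms by simp
  have "eta*k'*(1-sig)/(2-sig) * (M powr (2-sig) - p powr ((2-sig)/th))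
      < eta*k*(1-sig)/(2-sig) * (M powr (2-sig) - p powr ((2-sig)/th))"
    using a assms sig eta by (intro mult_strict_right_mono divide_strict_right_mono mult_strict_right_mono mult_strict_left_mono) auto
  hence "N * (p * (M powr (1-sig) - p powr ((1-sig)/th))
     - eta*k*(1-sig)/(2-sig) * (M powr (2-sig) - p powr ((2-sig)/th)))
     < N * (p * (M powr (1-sig) - p powr ((1-sig)/th))
     - eta*k'*(1-sig)/(2-sig) * (M powr (2-sig) - p powr ((2-sig)/th)))"
    using N by (intro mult_strict_left_mono) auto
  thus ?thesis unfolding RC_def using M by (intro divide_strict_right_mono) auto
qed

lemma RC_dec:
  assumes k: "k > 0" and bound: "eta < 1 / (k * M powr (1 - th))"
    and p1: "0 < p1" "p1 \<le> a" "a < b" "b < pmax th M"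
    and g: "gf sig M th eta k (p1 powr ((1-sig)/th)) < 0"
  shows "RC N sig M th eta k b < RC N sig M th eta k a"
proof (rule DERIV_neg_imp_decreasing[OF p1(3)])
  fix x assume x0: "a \<le> x" "x \<le> b"
  hence x: "a \<le> x \<and> x \<le> b" by simp
  hence xp: "x > 0" using p1 by auto
  have gx: "gf sig M th eta k (x powr ((1-sig)/th)) < 0"
  proof (cases "x = p1")
    case True thus ?thesis using g by simp
  next
    case False
    hence "p1 < x" using x p1 by auto
    hence "p1 powr ((1-sig)/th) < x powr ((1-sig)/th)"
      using p1 sig th by (intro powr_less_mono2) auto
    moreover have "x powr ((1-sig)/th) < M powr (1-sig)"
      using v_lt_Ms x p1 by auto
    ultimately show ?thesis
      using gf_neg[OF sig th _ _ _ _ _ less_imp_le[OF g] gf_Mval[OF sig th M eta k bound]] eta k p1 by auto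
  qed
  have "N / (th * M powr (1-sig)) > 0" using N th M by simp
  hence "N / (th * M powr (1-sig)) * gf sig M th eta k (x powr ((1-sig)/th)) < 0"
    using mult_pos_neg[OF _ gx] by blast
  thus "\<exists>y. (RC N sig M th eta k has_real_derivative y) (at x) \<and> y < 0"
    using RC_deriv[OF sig th M xp] by blast
qed

lemma UC_dec:
  assumes "0 \<le> a" "a < b" "b < pmax th M"
  shows "UC N sig M th b < UC N sig M th a"
proof (rule DERIV_neg_imp_decreasing_open[OF assms(2)])
  show "continuous_on {a..b} (UC N sig M th)"
    using UC_cont by (rule continuous_on_subset) (use assms in auto)
  fix x assume x: "a < x" "x < b"
  hence xp: "x > 0" using assms by auto
  have d1: "((\<lambda>p. p powr ((1-sig)/th)) has_real_derivative ((1-sig)/th) * x powr ((1-sig)/th - 1)) (at x)"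
    by (rule has_real_derivative_powr[OF xp])
  have d2: "((\<lambda>p. p powr ((th+1-sig)/th)) has_real_derivative ((th+1-sig)/th) * x powr ((th+1-sig)/th - 1)) (at x)"
    by (rule has_real_derivative_powr[OF xp])
  have D: "(UC N sig M th has_real_derivative
     N * ((1-sig)/(th+1-sig) * (0 - ((th+1-sig)/th) * x powr ((th+1-sig)/th - 1))
      - (1 * (M powr (1-sig) - x powr ((1-sig)/th)) + (0 - ((1-sig)/th) * x powr ((1-sig)/th - 1)) * x))
      / M powr (1-sig)) (at x)"
    unfolding UC_def[abs_def]
    by (intro DERIV_cdivide DERIV_cmult DERIV_diff DERIV_mult DERIV_ident DERIV_const d1 d2)
  have e1: "x * x powr ((1-sig)/th - 1) = x powr ((1-sig)/th)"
    using xp by (simp add: powr_diff)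
  have e2: "x powr ((th+1-sig)/th - 1) = x powr ((1-sig)/th)"
    using th by (simp add: field_simps)
  have "N * ((1-sig)/(th+1-sig) * (0 - ((th+1-sig)/th) * x powr ((th+1-sig)/th - 1))
      - (1 * (M powr (1-sig) - x powr ((1-sig)/th)) + (0 - ((1-sig)/th) * x powr ((1-sig)/th - 1)) * x))
      / M powr (1-sig) = - N * (M powr (1-sig) - x powr ((1-sig)/th)) / M powr (1-sig)"
  proof -
    have h: "(0 - ((1-sig)/th) * x powr ((1-sig)/th - 1)) * x = - ((1-sig)/th) * x powr ((1-sig)/th)"
      using e1 by (simp add: algebra_simps)
    have "th + 1 - sig \<noteq> 0" "M powr (1-sig) \<noteq> 0" "th \<noteq> 0" using sig th M by auto
    thus ?thesis unfolding e2 h by (rule algU)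
  qed
  moreover have "- N * (M powr (1-sig) - x powr ((1-sig)/th)) / M powr (1-sig) < 0"
    using v_lt_Ms[of x] x assms N M by (simp add: divide_neg_pos mult_pos_neg)
  ultimately show "\<exists>y. (UC N sig M th has_real_derivative y) (at x) \<and> y < 0"
    using D by auto
qed

lemma PC_mono:
  assumes "k > 0" "0 \<le> a" "a \<le> b"
  shows "PC N sig M th k b \<le> PC N sig M th k a"
proof -
  have "a powr ((2-sig)/th) \<le> b powr ((2-sig)/th)"
    using assms by (intro powr_mono2) (use sig th in auto)
  hence "k * N * (1-sig)/(2-sig) * (M powr (2-sig) - b powr ((2-sig)/th))
     \<le> k * N * (1-sig)/(2-sig) * (M powr (2-sig) - a powr ((2-sig)/th))"
    using assms N sig by (intro mult_left_mono) auto
  thus ?thesis unfolding PC_def by (intro divide_right_mono) auto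
qed

end



context
  fixes N sig M th eta :: real
  assumes sig: "0 < sig" "sig < 1" and th: "0 < th" "th < 1" and M: "M > 0"
    and N: "N > 0" and eta: "eta > 0"
begin

lemma RC_deriv_sign_pos:
  assumes "x > 0" "gf sig M th eta k (x powr ((1-sig)/th)) > 0"
  shows "\<exists>y. (RC N sig M th eta k has_real_derivative y) (at x) \<and> y > 0"
proof -
  have "N / (th * M powr (1-sig)) > 0" using N th M by simp
  hence "N / (th * M powr (1-sig)) * gf sig M th eta k (x powr ((1-sig)/th)) > 0"
    using mult_pos_pos[OF _ assms(2)] by blast
  thus ?thesis using RC_deriv[OF sig th M assms(1)] by blast
qed

lemma RC_deriv_sign_neg:
  assumes "x > 0" "gf sig M th eta k (x powr ((1-sig)/th)) < 0"
  shows "\<exists>y. (RC N sig M th eta k has_real_derivative y) (at x) \<and> y < 0"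
proof -
  have "N / (th * M powr (1-sig)) > 0" using N th M by simp
  hence "N / (th * M powr (1-sig)) * gf sig M th eta k (x powr ((1-sig)/th)) < 0"
    using mult_pos_neg[OF _ assms(2)] by blast
  thus ?thesis using RC_deriv[OF sig th M assms(1)] by blast
qed

lemma unimodal:
  assumes k: "k > 0" and bound: "eta < 1 / (k * M powr (1 - th))"
  shows "\<exists>ps. 0 < ps \<and> ps < pmax th M \<and> gf sig M th eta k (ps powr ((1-sig)/th)) = 0
    \<and> (\<forall>p. 0 \<le> p \<and> p < ps \<longrightarrow> gf sig M th eta k (p powr ((1-sig)/th)) > 0)
    \<and> (\<forall>p. ps < p \<and> p < pmax th M \<longrightarrow> gf sig M th eta k (p powr ((1-sig)/th)) < 0)
    \<and> (\<forall>a b. 0 \<le> a \<and> a < b \<and> b \<le> ps \<longrightarrow> RC N sig M th eta k a < RC N sig M th eta k b)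
    \<and> (\<forall>a b. ps \<le> a \<and> a < b \<and> b < pmax th M \<longrightarrow> RC N sig M th eta k b < RC N sig M th eta k a)"
proof -
  let ?g = "gf sig M th eta k"
  define Ms where "Ms = M powr (1-sig)"
  have gM: "?g Ms < 0" unfolding Ms_def by (rule gf_Mval[OF sig th M eta k bound])
  have g0: "?g 0 > 0" by (rule gf_zero[OF th(1) M])
  have Msp: "Ms > 0" using M by (simp add: Ms_def)
  obtain vs where vs: "0 \<le> vs" "vs \<le> Ms" "?g vs = 0"
    using IVT2'[of ?g Ms 0 0] gM g0 Msp continuous_on_subset[OF gf_cont[OF sig th, of M eta k], of "{0..Ms}"]
    by force
  have vs0: "vs > 0" using vs g0 by (cases "vs = 0") auto
  have vsM: "vs < Ms" using vs gM by (cases "vs = Ms") auto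
  define ps where "ps = vs powr (th/(1-sig))"
  have vps: "ps powr ((1-sig)/th) = vs"
  proof -
    have "th/(1-sig) * ((1-sig)/th) = 1" using sig th by simp
    thus ?thesis unfolding ps_def using vs by (simp add: powr_powr)
  qed
  have ps0: "ps > 0" using vs0 by (simp add: ps_def)
  have pspm: "ps < pmax th M"
  proof -
    have "vs powr (th/(1-sig)) < Ms powr (th/(1-sig))"
      using vs0 vsM sig th by (intro powr_less_mono2) auto
    moreover have "Ms powr (th/(1-sig)) = M powr th"
    proof -
      have "(1-sig) * (th/(1-sig)) = th" using sig by simp
      thus ?thesis unfolding Ms_def by (simp add: powr_powr)
    qed
    ultimately show ?thesis by (simp add: ps_def pmax_def)
  qed
  have below: "\<forall>p. 0 \<le> p \<and> p < ps \<longrightarrow> ?g (p powr ((1-sig)/th)) > 0"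
  proof (intro allI impI)
    fix p assume p: "0 \<le> p \<and> p < ps"
    have lt: "p powr ((1-sig)/th) < vs"
      using p sig th vps by (metis powr_less_mono2 divide_pos_pos diff_gt_0_iff_gt)
    show "?g (p powr ((1-sig)/th)) > 0"
    proof (cases "p = 0")
      case True thus ?thesis using g0 by simp
    next
      case False
      hence pp: "p powr ((1-sig)/th) > 0" using p by simp
      show ?thesis
      proof (rule ccontr)
        assume "\<not> ?thesis"
        hence le: "?g (p powr ((1-sig)/th)) \<le> 0" by simp
        have "?g vs < 0"
          using gf_neg[OF sig th _ _ pp lt vsM le gM] eta k by simp
        thus False using vs by simp
      qed
    qed
  qed
  have above: "\<forall>p. ps < p \<and> p < pmax th M \<longrightarrow> ?g (p powr ((1-sig)/th)) < 0"
  proof (intro allI impI)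
    fix p assume p: "ps < p \<and> p < pmax th M"
    have lt: "vs < p powr ((1-sig)/th)"
      using p sig th vps ps0 by (metis powr_less_mono2 divide_pos_pos diff_gt_0_iff_gt less_imp_le)
    have lt2: "p powr ((1-sig)/th) < Ms"
      using v_lt_Ms[OF sig th M N eta, of p] p ps0 by (simp add: Ms_def)
    show "?g (p powr ((1-sig)/th)) < 0"
      using gf_neg[OF sig th _ _ vs0 lt lt2 _ gM] vs eta k by simp
  qed
  have inc: "\<forall>a b. 0 \<le> a \<and> a < b \<and> b \<le> ps \<longrightarrow> RC N sig M th eta k a < RC N sig M th eta k b"
  proof (intro allI impI)
    fix a b assume ab: "0 \<le> a \<and> a < b \<and> b \<le> ps"
    show "RC N sig M th eta k a < RC N sig M th eta k b"
    proof (rule DERIV_pos_imp_increasing_open[of a b])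
      show "a < b" using ab by simp
      show "continuous_on {a..b} (RC N sig M th eta k)"
        using RC_cont[OF sig th M N eta] by (rule continuous_on_subset) (use ab in auto)
      fix x assume "a < x" "x < b"
      thus "\<exists>y. (RC N sig M th eta k has_real_derivative y) (at x) \<and> y > 0"
        using RC_deriv_sign_pos below ab by auto
    qed
  qed
  have dec: "\<forall>a b. ps \<le> a \<and> a < b \<and> b < pmax th M \<longrightarrow> RC N sig M th eta k b < RC N sig M th eta k a"
  proof (intro allI impI)
    fix a b assume ab: "ps \<le> a \<and> a < b \<and> b < pmax th M"
    show "RC N sig M th eta k b < RC N sig M th eta k a"
    proof (rule DERIV_neg_imp_decreasing_open[of a b])
      show "a < b" using ab by simp
      show "continuous_on {a..b} (RC N sig M th eta k)"
        using RC_cont[OF sig th M N eta] by (rule continuous_on_subset) (use ab ps0 in auto)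
      fix x assume "a < x" "x < b"
      thus "\<exists>y. (RC N sig M th eta k has_real_derivative y) (at x) \<and> y < 0"
        using RC_deriv_sign_neg above ab ps0 by auto
    qed
  qed
  show ?thesis using ps0 pspm vps vs below above inc dec by blast
qed

lemma deriv_id:
  assumes p: "0 < p" "p < pmax th M"
    and d: "(Rev N sig M th eta k has_real_derivative d) (at p)"
  shows "d = N / (th * M powr (1-sig)) * gf sig M th eta k (p powr ((1-sig)/th))"
proof -
  have ev: "eventually (\<lambda>x. Rev N sig M th eta k x = RC N sig M th eta k x) (nhds p)"
    unfolding eventually_nhds
    by (rule exI[of _ "{0<..<pmax th M}"]) (use p Rev_closed[OF sig th M] in auto)
  have "(Rev N sig M th eta k has_real_derivative
          N / (th * M powr (1-sig)) * gf sig M th eta k (p powr ((1-sig)/th))) (at p)"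
    using DERIV_cong_ev[OF refl ev refl] RC_deriv[OF sig th M p(1)] by simp
  thus ?thesis using d DERIV_unique by blast
qed

lemma Feas_iff:
  "q \<in> Feas N sig M th eta C ka kp \<longleftrightarrow>
     0 \<le> q \<and> q < pmax th M \<and> RC N sig M th eta ka q > 0 \<and> PC N sig M th kp q \<le> C"
proof -
  have "Rev N sig M th eta ka q > 0 \<Longrightarrow> q < pmax th M"
    unfolding Rev_def by (cases "q < pmax th M") auto
  thus ?thesis unfolding Feas_def
    using Rev_closed[OF sig th M, where p=q and eta=eta and k=ka and N=N]
      Peak_closed[OF sig th M, where p=q and k=kp and N=N] by auto
qed

lemma p0_bounds:
  assumes ka: "ka > 0" and ne: "Feas N sig M th eta C ka kp \<noteq> {}"
  shows "0 < p0 N sig M th eta C ka kp" "p0 N sig M th eta C ka kp < pmax th M"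
    "bdd_below (Feas N sig M th eta C ka kp)"
proof -
  let ?F = "Feas N sig M th eta C ka kp"
  show bdd: "bdd_below ?F" unfolding bdd_below_def using Feas_iff by blast
  obtain q where q: "q \<in> ?F" using ne by blast
  have "p0 N sig M th eta C ka kp \<le> q" unfolding p0_def using cInf_lower[OF q bdd] .
  thus "p0 N sig M th eta C ka kp < pmax th M" using q Feas_iff by force
  let ?R = "RC N sig M th eta ka"
  have R0: "?R 0 < 0" by (rule RC_zero[OF sig th M N eta ka])
  obtain d where d: "d > 0" "\<forall>x\<in>{0..}. dist x 0 < d \<longrightarrow> dist (?R x) (?R 0) < - ?R 0"
    using RC_cont[OF sig th M N eta, of ka] R0 unfolding continuous_on_iff
    by (metis atLeast_iff neg_0_less_iff_less order_refl)
  have neg: "\<And>x. 0 \<le> x \<Longrightarrow> x < d \<Longrightarrow> ?R x < 0"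
  proof -
    fix x :: real assume "0 \<le> x" "x < d"
    hence "dist (?R x) (?R 0) < - ?R 0" using d by (auto simp: dist_real_def)
    thus "?R x < 0" by (auto simp: dist_real_def)
  qed
  show "0 < p0 N sig M th eta C ka kp"
  proof (rule ccontr)
    assume "\<not> ?thesis"
    hence "Inf ?F < d" using d unfolding p0_def by simp
    then obtain x where "x \<in> ?F" "x < d" using cInf_less_iff[OF ne bdd] by blast
    thus False using neg Feas_iff by force
  qed
qed

end



context
  fixes N sig M th eta C kp :: real
  assumes sig: "0 < sig" "sig < 1" and th: "0 < th" "th < 1" and M: "M > 0"
    and N: "N > 0" and eta: "eta > 0" and kp: "kp > 0"
begin

definition "UNI k ps \<longleftrightarrow> 0 < ps \<and> ps < pmax th M \<and> gf sig M th eta k (ps powr ((1-sig)/th)) = 0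
    \<and> (\<forall>p. 0 \<le> p \<and> p < ps \<longrightarrow> gf sig M th eta k (p powr ((1-sig)/th)) > 0)
    \<and> (\<forall>p. ps < p \<and> p < pmax th M \<longrightarrow> gf sig M th eta k (p powr ((1-sig)/th)) < 0)
    \<and> (\<forall>a b. 0 \<le> a \<and> a < b \<and> b \<le> ps \<longrightarrow> RC N sig M th eta k a < RC N sig M th eta k b)
    \<and> (\<forall>a b. ps \<le> a \<and> a < b \<and> b < pmax th M \<longrightarrow> RC N sig M th eta k b < RC N sig M th eta k a)"

lemma UNI_ex: "k > 0 \<Longrightarrow> eta < 1 / (k * M powr (1 - th)) \<Longrightarrow> \<exists>ps. UNI k ps"
  unfolding UNI_def by (rule unimodal[OF sig th M N eta])

lemma peq_char:
  assumes k: "k > 0" and U: "UNI k ps"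
    and q: "0 \<le> q" "q < ps" "RC N sig M th eta k q > 0" "PC N sig M th kp q \<le> C"
  shows "peq N sig M th eta C k kp = ps" "MaxRev N sig M th eta C k kp = RC N sig M th eta k ps"
    "ps \<in> Feas N sig M th eta C k kp"
proof -
  let ?F = "Feas N sig M th eta C k kp"
  let ?R = "RC N sig M th eta k"
  from U have ps: "0 < ps" "ps < pmax th M"
    and inc: "\<forall>a b. 0 \<le> a \<and> a < b \<and> b \<le> ps \<longrightarrow> ?R a < ?R b"
    and dec: "\<forall>a b. ps \<le> a \<and> a < b \<and> b < pmax th M \<longrightarrow> ?R b < ?R a"
    unfolding UNI_def by auto
  have "?R q < ?R ps" using inc q by auto
  moreover have "PC N sig M th kp ps \<le> PC N sig M th kp q"
    using PC_mono[OF sig th M N eta kp] q by auto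
  ultimately show psF: "ps \<in> ?F"
    using Feas_iff[OF sig th M N eta] ps q by force
  have mx: "\<And>r. r \<in> ?F \<Longrightarrow> r \<noteq> ps \<Longrightarrow> ?R r < ?R ps"
  proof -
    fix r assume r: "r \<in> ?F" "r \<noteq> ps"
    hence r': "0 \<le> r" "r < pmax th M" using Feas_iff[OF sig th M N eta] by auto
    show "?R r < ?R ps"
    proof (cases "r < ps")
      case True thus ?thesis using inc r' by auto
    next
      case False thus ?thesis using dec r' r by auto
    qed
  qed
  have RevR: "\<And>r. r \<in> ?F \<Longrightarrow> Rev N sig M th eta k r = ?R r"
    using Rev_closed[OF sig th M] Feas_iff[OF sig th M N eta] by blast
  have le: "\<And>r. r \<in> ?F \<Longrightarrow> Rev N sig M th eta k r \<le> Rev N sig M th eta k ps"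
  proof -
    fix r assume r: "r \<in> ?F"
    show "Rev N sig M th eta k r \<le> Rev N sig M th eta k ps"
    proof (cases "r = ps")
      case False thus ?thesis using mx[OF r False] RevR[OF r] RevR[OF psF] by simp
    qed simp
  qed
  show "peq N sig M th eta C k kp = ps"
    unfolding peq_def
  proof (rule the_equality)
    show "ps \<in> ?F \<and> (\<forall>q\<in>?F. Rev N sig M th eta k q \<le> Rev N sig M th eta k ps)"
      using psF le by blast
    fix p assume p: "p \<in> ?F \<and> (\<forall>q\<in>?F. Rev N sig M th eta k q \<le> Rev N sig M th eta k p)"
    show "p = ps"
    proof (rule ccontr)
      assume "p \<noteq> ps"
      hence "?R p < ?R ps" using mx p by blast
      moreover have "Rev N sig M th eta k ps \<le> Rev N sig M th eta k p" using p psF by blast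
      ultimately show False using RevR[OF psF] RevR p by fastforce
    qed
  qed
  show "MaxRev N sig M th eta C k kp = ?R ps"
    unfolding MaxRev_def
  proof (rule cSup_eq_maximum)
    show "?R ps \<in> Rev N sig M th eta k ` ?F" using psF RevR[OF psF] by force
    fix x assume "x \<in> Rev N sig M th eta k ` ?F"
    then obtain r where "r \<in> ?F" "x = Rev N sig M th eta k r" by blast
    thus "x \<le> ?R ps" using le RevR[OF psF] by simp
  qed
qed

end



context
  fixes N sig M th eta C kp :: real
  assumes sig: "0 < sig" "sig < 1" and th: "0 < th" "th < 1" and M: "M > 0"
    and N: "N > 0" and eta: "eta > 0" and kp: "kp > 0"
begin

lemma bound_mono:
  assumes "0 < k" "k \<le> ka" "eta < 1 / (ka * M powr (1 - th))"
  shows "eta < 1 / (k * M powr (1 - th))"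
proof -
  have X: "M powr (1-th) > 0" using M by simp
  have "1 / (ka * M powr (1 - th)) \<le> 1 / (k * M powr (1 - th))"
    using assms X by (intro divide_left_mono mult_right_mono mult_pos_pos) auto
  thus ?thesis using assms by linarith
qed

lemma case_ii:
  assumes ka: "0 < ka" and bound: "eta < 1 / (ka * M powr (1 - th))"
    and ne: "Feas N sig M th eta C ka kp \<noteq> {}"
    and dd: "(Rev N sig M th eta ka has_real_derivative d) (at (p0 N sig M th eta C ka kp))" "d > 0"
  shows
        "(\<forall>\<^sub>F k in at_left ka. peq N sig M th eta C k kp < peq N sig M th eta C ka kp) \<and>
        (\<forall>x. 0 \<le> x \<and> x \<le> M \<and> x powr th - peq N sig M th eta C ka kp > 0 \<longrightarrow>
             (\<forall>\<^sub>F k in at_left ka. x powr th - peq N sig M th eta C k kp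
                                     > x powr th - peq N sig M th eta C ka kp)) \<and>
        (\<forall>\<^sub>F k in at_left ka. MaxRev N sig M th eta C k kp > MaxRev N sig M th eta C ka kp) \<and>
        (\<forall>\<^sub>F k in at_left ka. USurp N sig M th (peq N sig M th eta C k kp)
                                > USurp N sig M th (peq N sig M th eta C ka kp)) \<and>
        (\<forall>\<^sub>F k in at_left ka. SWelf N sig M th eta k (peq N sig M th eta C k kp)
                                > SWelf N sig M th eta ka (peq N sig M th eta C ka kp))"
proof -
  let ?p0 = "p0 N sig M th eta C ka kp"
  let ?F = "Feas N sig M th eta C ka kp"
  let ?v = "\<lambda>p. p powr ((1-sig)/th)"
  note pb = p0_bounds[OF sig th M N eta ka ne]
  have cpos: "N / (th * M powr (1-sig)) > 0" using N th M by simp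
  have deq: "d = N / (th * M powr (1-sig)) * gf sig M th eta ka (?v ?p0)"
    by (rule deriv_id[OF sig th M N eta pb(1,2) dd(1)])
  have gp0: "gf sig M th eta ka (?v ?p0) > 0"
  proof (rule ccontr)
    assume "\<not> ?thesis"
    hence "N / (th * M powr (1-sig)) * gf sig M th eta ka (?v ?p0) \<le> 0"
      using cpos by (intro mult_nonneg_nonpos) auto
    thus False using deq dd(2) by linarith
  qed
  obtain ps where U: "UNI N sig M th eta ka ps" using UNI_ex[OF sig th M N eta kp ka bound] by blast
  note Ud = U[unfolded UNI_def[OF sig th M N eta kp]]
  have p0ps: "?p0 < ps"
  proof (rule ccontr)
    assume "\<not> ?thesis"
    hence "ps = ?p0 \<or> ps < ?p0" by auto
    thus False
    proof
      assume "ps = ?p0" thus False using Ud gp0 by simp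
    next
      assume "ps < ?p0"
      moreover have "\<forall>p. ps < p \<and> p < pmax th M \<longrightarrow> gf sig M th eta ka (?v p) < 0" using Ud by blast
      ultimately have "gf sig M th eta ka (?v ?p0) < 0" using pb by auto
      thus False using gp0 by simp
    qed
  qed
  obtain q0 where q0F: "q0 \<in> ?F" and q0ps: "q0 < ps"
    using cInf_less_iff[OF ne pb(3)] p0ps unfolding p0_def by blast
  have q0: "0 \<le> q0" "q0 < pmax th M" "RC N sig M th eta ka q0 > 0" "PC N sig M th kp q0 \<le> C"
    using q0F Feas_iff[OF sig th M N eta] by auto
  have peqka: "peq N sig M th eta C ka kp = ps" "MaxRev N sig M th eta C ka kp = RC N sig M th eta ka ps"
    using peq_char[OF sig th M N eta kp ka U q0(1) q0ps q0(3,4)] by auto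
  have "\<forall>p. 0 \<le> p \<and> p < ps \<longrightarrow> gf sig M th eta ka (?v p) > 0" using Ud by blast
  hence gq: "gf sig M th eta ka (?v q0) > 0" using q0 q0ps by auto
  have "((\<lambda>k. gf sig M th eta k (?v q0)) \<longlongrightarrow> gf sig M th eta ka (?v q0)) (at_left ka)"
    unfolding gf_def by (intro tendsto_intros)
  hence ev1: "\<forall>\<^sub>F k in at_left ka. gf sig M th eta k (?v q0) > 0"
    using gq by (rule order_tendstoD(1))
  have ev2: "\<forall>\<^sub>F k in at_left ka. k \<in> {0<..<ka}" by (rule eventually_at_left_real[OF ka])
  have key: "\<forall>\<^sub>F k in at_left ka. \<exists>psk. peq N sig M th eta C k kp = psk \<and> 0 < psk \<and> psk < ps \<and>
        MaxRev N sig M th eta C k kp = RC N sig M th eta k psk \<and> RC N sig M th eta k psk > RC N sig M th eta ka ps"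
    using ev1 ev2
  proof eventually_elim
    case (elim k)
    hence k: "0 < k" "k < ka" and gk: "gf sig M th eta k (?v q0) > 0" by auto
    have bk: "eta < 1 / (k * M powr (1 - th))" by (rule bound_mono) (use k bound in auto)
    obtain psk where Uk: "UNI N sig M th eta k psk" using UNI_ex[OF sig th M N eta kp k(1) bk] by blast
    note Ukd = Uk[unfolded UNI_def[OF sig th M N eta kp]]
    have q0psk: "q0 < psk"
    proof (rule ccontr)
      assume "\<not> ?thesis"
      hence "psk = q0 \<or> psk < q0" by auto
      thus False
      proof
        assume "psk = q0" thus False using Ukd gk by simp
      next
        assume "psk < q0"
        moreover have "\<forall>p. psk < p \<and> p < pmax th M \<longrightarrow> gf sig M th eta k (?v p) < 0" using Ukd by blast
        ultimately have "gf sig M th eta k (?v q0) < 0" using q0 by auto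
        thus False using gk by simp
      qed
    qed
    have "RC N sig M th eta k q0 > RC N sig M th eta ka q0"
      by (rule RC_k_mono[OF sig th M N eta q0(1,2) k(2)])
    hence Rq: "RC N sig M th eta k q0 > 0" using q0 by linarith
    have pk: "peq N sig M th eta C k kp = psk" "MaxRev N sig M th eta C k kp = RC N sig M th eta k psk"
      using peq_char[OF sig th M N eta kp k(1) Uk q0(1) q0psk Rq q0(4)] by auto
    have "gf sig M th eta k (?v ps) < gf sig M th eta ka (?v ps)"
      by (rule gf_mono_k) (use sig eta k Ud in auto)
    hence gks: "gf sig M th eta k (?v ps) < 0" using Ud by simp
    have psk_ps: "psk < ps"
    proof (rule ccontr)
      assume "\<not> ?thesis"
      hence "ps = psk \<or> ps < psk" by auto
      thus False
      proof
        assume "ps = psk" thus False using Ukd gks by simp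
      next
        assume "ps < psk"
        moreover have "\<forall>p. 0 \<le> p \<and> p < psk \<longrightarrow> gf sig M th eta k (?v p) > 0" using Ukd by blast
        ultimately have "gf sig M th eta k (?v ps) > 0" using Ud by auto
        thus False using gks by simp
      qed
    qed
    have "\<forall>a b. psk \<le> a \<and> a < b \<and> b < pmax th M \<longrightarrow> RC N sig M th eta k b < RC N sig M th eta k a"
      using Ukd by blast
    hence "RC N sig M th eta k ps < RC N sig M th eta k psk" using psk_ps Ud by auto
    moreover have "RC N sig M th eta k ps > RC N sig M th eta ka ps"
      by (rule RC_k_mono[OF sig th M N eta _ _ k(2)]) (use Ud in auto)
    moreover have "0 < psk" using Ukd by blast
    ultimately show ?case using pk psk_ps by (intro exI[of _ psk]) auto
  qed
  have psbd: "0 < ps" "ps < pmax th M" using Ud by auto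
  have A: "\<forall>\<^sub>F k in at_left ka. peq N sig M th eta C k kp < peq N sig M th eta C ka kp"
    using key by eventually_elim (use peqka in auto)
  have B: "\<forall>x. 0 \<le> x \<and> x \<le> M \<and> x powr th - peq N sig M th eta C ka kp > 0 \<longrightarrow>
             (\<forall>\<^sub>F k in at_left ka. x powr th - peq N sig M th eta C k kp
                                     > x powr th - peq N sig M th eta C ka kp)"
    using A by (auto elim: eventually_mono)
  have Cc: "\<forall>\<^sub>F k in at_left ka. MaxRev N sig M th eta C k kp > MaxRev N sig M th eta C ka kp"
    using key by eventually_elim (use peqka in auto)
  have US: "\<forall>\<^sub>F k in at_left ka. USurp N sig M th (peq N sig M th eta C k kp)
                                > USurp N sig M th (peq N sig M th eta C ka kp) \<and>
       Rev N sig M th eta k (peq N sig M th eta C k kp) > Rev N sig M th eta ka (peq N sig M th eta C ka kp)"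
    using key
  proof eventually_elim
    case (elim k)
    then obtain psk where psk: "peq N sig M th eta C k kp = psk" "0 < psk" "psk < ps"
      "RC N sig M th eta k psk > RC N sig M th eta ka ps" by blast
    have "UC N sig M th ps < UC N sig M th psk"
      by (rule UC_dec[OF sig th M N eta]) (use psk psbd in auto)
    moreover have "USurp N sig M th psk = UC N sig M th psk" "USurp N sig M th ps = UC N sig M th ps"
      using USurp_closed[OF sig th M] psk psbd by auto
    moreover have "Rev N sig M th eta k psk = RC N sig M th eta k psk"
      "Rev N sig M th eta ka ps = RC N sig M th eta ka ps"
      using Rev_closed[OF sig th M] psk psbd by auto
    ultimately show ?case using psk peqka by auto
  qed
  have D: "\<forall>\<^sub>F k in at_left ka. USurp N sig M th (peq N sig M th eta C k kp)
                                > USurp N sig M th (peq N sig M th eta C ka kp)"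
    using US by (auto elim: eventually_mono)
  have E: "\<forall>\<^sub>F k in at_left ka. SWelf N sig M th eta k (peq N sig M th eta C k kp)
                                > SWelf N sig M th eta ka (peq N sig M th eta C ka kp)"
    using US by eventually_elim (auto simp: SWelf_def)
  show ?thesis using A B Cc D E by blast
qed

end



definition Cc where "Cc N sig M C = C*(2-sig)*M powr (1-sig)/((1-sig)*N)"
definition bs where "bs N sig M C k = M powr (2-sig) - Cc N sig M C / k"
definition pC where "pC N sig M th C k = (bs N sig M C k) powr (th/(2-sig))"

lemma powr_inv_le:
  fixes b q e :: real
  assumes "b > 0" "q \<ge> 0" "e > 0"
  shows "b \<le> q powr e \<longleftrightarrow> b powr (1/e) \<le> q"
proof
  assume "b \<le> q powr e"
  hence "b powr (1/e) \<le> (q powr e) powr (1/e)" using assms by (intro powr_mono2) auto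
  thus "b powr (1/e) \<le> q" using assms by (simp add: powr_powr)
next
  assume "b powr (1/e) \<le> q"
  hence "(b powr (1/e)) powr e \<le> q powr e" using assms by (intro powr_mono2) auto
  thus "b \<le> q powr e" using assms by (simp add: powr_powr)
qed

lemma powr_inv_less:
  fixes b q e :: real
  assumes "b > 0" "q \<ge> 0" "e > 0"
  shows "b < q powr e \<longleftrightarrow> b powr (1/e) < q"
proof -
  have "q powr e \<le> b \<longleftrightarrow> q \<le> b powr (1/e)"
  proof
    assume "q powr e \<le> b"
    hence "(q powr e) powr (1/e) \<le> b powr (1/e)" using assms by (intro powr_mono2) auto
    thus "q \<le> b powr (1/e)" using assms by (simp add: powr_powr)
  next
    assume "q \<le> b powr (1/e)"
    hence "q powr e \<le> (b powr (1/e)) powr e" using assms by (intro powr_mono2) auto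
    thus "q powr e \<le> b" using assms by (simp add: powr_powr)
  qed
  thus ?thesis by linarith
qed

context
  fixes N sig M th eta C ka :: real
  assumes sig: "0 < sig" "sig < 1" and th: "0 < th" "th < 1" and M: "M > 0"
    and N: "N > 0" and eta: "eta > 0" and C: "C > 0" and ka: "ka > 0"
    and bound: "eta < 1 / (ka * M powr (1 - th))"
begin

lemma Cc_pos: "Cc N sig M C > 0"
  unfolding Cc_def using C sig M N by (intro divide_pos_pos mult_pos_pos) auto

lemma PCeq:
  assumes k: "k > 0"
  shows "PC N sig M th k q \<le> C \<longleftrightarrow> bs N sig M C k \<le> q powr ((2-sig)/th)"
proof -
  define l where "l = k*N*(1-sig)/((2-sig)*M powr (1-sig))"
  have l: "l > 0" unfolding l_def using k N sig M by (intro divide_pos_pos mult_pos_pos) auto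
  have nz: "2 - sig \<noteq> 0" "M powr (1-sig) \<noteq> 0" "1 - sig \<noteq> 0" "k \<noteq> 0" "N \<noteq> 0"
    using sig M k N by auto
  have e1: "PC N sig M th k q = l * (M powr (2-sig) - q powr ((2-sig)/th))"
    unfolding PC_def l_def using nz by (simp add: field_simps)
  have e2: "Cc N sig M C / k = C / l"
    unfolding Cc_def l_def using nz by (simp add: field_simps)
  have "l * (M powr (2-sig) - q powr ((2-sig)/th)) \<le> C \<longleftrightarrow> (M powr (2-sig) - q powr ((2-sig)/th)) \<le> C / l"
    using l by (simp add: pos_le_divide_eq mult.commute)
  thus ?thesis unfolding e1 bs_def e2 by linarith
qed

lemma pC_pow: "bs N sig M C k > 0 \<Longrightarrow> pC N sig M th C k powr ((2-sig)/th) = bs N sig M C k"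
proof -
  assume "bs N sig M C k > 0"
  moreover have "th/(2-sig) * ((2-sig)/th) = 1" using sig th by simp
  ultimately show ?thesis unfolding pC_def by (simp add: powr_powr)
qed

lemma Feas_ge_pC:
  assumes k: "k > 0" and b: "bs N sig M C k > 0" and q: "q \<in> Feas N sig M th eta C ka k"
  shows "pC N sig M th C k \<le> q"
proof -
  have q': "0 \<le> q" "PC N sig M th k q \<le> C" using q Feas_iff[OF sig th M N eta] by auto
  hence "bs N sig M C k \<le> q powr ((2-sig)/th)" using PCeq[OF k] by simp
  hence "bs N sig M C k powr (1/((2-sig)/th)) \<le> q"
    using powr_inv_le[OF b q'(1), of "(2-sig)/th"] sig th by simp
  thus ?thesis unfolding pC_def by simp
qed

lemma peq_i:
  assumes k: "k > 0" and b: "bs N sig M C k > 0"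
    and pp: "0 < pC N sig M th C k" "pC N sig M th C k < pmax th M"
    and g: "gf sig M th eta ka (pC N sig M th C k powr ((1-sig)/th)) < 0"
    and R: "RC N sig M th eta ka (pC N sig M th C k) > 0"
  shows "peq N sig M th eta C ka k = pC N sig M th C k"
proof -
  let ?F = "Feas N sig M th eta C ka k"
  let ?p = "pC N sig M th C k"
  let ?R = "RC N sig M th eta ka"
  have pF: "?p \<in> ?F"
    using Feas_iff[OF sig th M N eta] pp R PCeq[OF k] pC_pow[OF b] by auto
  have RevR: "\<And>r. r \<in> ?F \<Longrightarrow> Rev N sig M th eta ka r = ?R r"
    using Rev_closed[OF sig th M] Feas_iff[OF sig th M N eta] by blast
  have mx: "\<And>r. r \<in> ?F \<Longrightarrow> r \<noteq> ?p \<Longrightarrow> ?R r < ?R ?p"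
  proof -
    fix r assume r: "r \<in> ?F" "r \<noteq> ?p"
    hence "?p < r" using Feas_ge_pC[OF k b r(1)] by auto
    moreover have "r < pmax th M" using r Feas_iff[OF sig th M N eta] by auto
    ultimately show "?R r < ?R ?p"
      using RC_dec[OF sig th M N eta ka bound pp(1) order_refl _ _ g] by auto
  qed
  have le: "\<And>r. r \<in> ?F \<Longrightarrow> Rev N sig M th eta ka r \<le> Rev N sig M th eta ka ?p"
  proof -
    fix r assume r: "r \<in> ?F"
    show "Rev N sig M th eta ka r \<le> Rev N sig M th eta ka ?p"
    proof (cases "r = ?p")
      case False thus ?thesis using mx[OF r False] RevR[OF r] RevR[OF pF] by simp
    qed simp
  qed
  show ?thesis
    unfolding peq_def
  proof (rule the_equality)
    show "?p \<in> ?F \<and> (\<forall>q\<in>?F. Rev N sig M th eta ka q \<le> Rev N sig M th eta ka ?p)"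
      using pF le by blast
    fix p assume p: "p \<in> ?F \<and> (\<forall>q\<in>?F. Rev N sig M th eta ka q \<le> Rev N sig M th eta ka p)"
    show "p = ?p"
    proof (rule ccontr)
      assume "p \<noteq> ?p"
      hence "?R p < ?R ?p" using mx p by blast
      moreover have "Rev N sig M th eta ka ?p \<le> Rev N sig M th eta ka p" using p pF by blast
      ultimately show False using RevR[OF pF] RevR p by fastforce
    qed
  qed
qed

lemma pC_deriv:
  assumes k: "k > 0" and b: "bs N sig M C k > 0"
  shows "(pC N sig M th C has_real_derivative
     (th/(2-sig)) * bs N sig M C k powr (th/(2-sig) - 1) * (Cc N sig M C / k^2)) (at k)"
proof -
  have "((\<lambda>k. bs N sig M C k) has_real_derivative Cc N sig M C / k^2) (at k)"
    unfolding bs_def[abs_def] using k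
    by (auto intro!: derivative_eq_intros simp: power2_eq_square field_simps)
  from DERIV_fun_powr[OF this b, of "th/(2-sig)"] show ?thesis
    unfolding pC_def[abs_def] by simp
qed

lemma pC_mono:
  assumes "0 < k" "k < k'" "bs N sig M C k > 0"
  shows "pC N sig M th C k < pC N sig M th C k'"
proof -
  have "Cc N sig M C / k' < Cc N sig M C / k"
    using assms Cc_pos by (intro divide_strict_left_mono) auto
  hence "bs N sig M C k < bs N sig M C k'" unfolding bs_def by simp
  thus ?thesis unfolding pC_def using assms sig th by (intro powr_less_mono2) auto
qed

end



context
  fixes N sig M th eta C ka :: real
  assumes sig: "0 < sig" "sig < 1" and th: "0 < th" "th < 1" and M: "M > 0"
    and N: "N > 0" and eta: "eta > 0" and C: "C > 0" and ka: "ka > 0"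
    and bound: "eta < 1 / (ka * M powr (1 - th))"
begin

lemma case_i:
  assumes kp: "0 < kp" "kp \<le> 1"
    and ne: "Feas N sig M th eta C ka kp \<noteq> {}"
    and dd: "(Rev N sig M th eta ka has_real_derivative d) (at (p0 N sig M th eta C ka kp))" "d < 0"
  shows
        "(\<exists>D > 0. ((\<lambda>k. peq N sig M th eta C ka k) has_real_derivative D) (at kp within {0<..1})) \<and>
        (\<exists>D < 0. ((\<lambda>k. Rev N sig M th eta ka (peq N sig M th eta C ka k)) has_real_derivative D)
                    (at kp within {0<..1})) \<and>
        (\<forall>x. 0 \<le> x \<and> x \<le> M \<and> x powr th - peq N sig M th eta C ka kp > 0 \<longrightarrow>
             (\<forall>\<^sub>F k in at_left kp. x powr th - peq N sig M th eta C ka k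
                                     > x powr th - peq N sig M th eta C ka kp)) \<and>
        (\<forall>\<^sub>F k in at_left kp. USurp N sig M th (peq N sig M th eta C ka k)
                                > USurp N sig M th (peq N sig M th eta C ka kp)) \<and>
        (\<forall>\<^sub>F k in at_left kp. SWelf N sig M th eta ka (peq N sig M th eta C ka k)
                                > SWelf N sig M th eta ka (peq N sig M th eta C ka kp))"
proof -
  let ?p0 = "p0 N sig M th eta C ka kp"
  let ?F = "Feas N sig M th eta C ka kp"
  let ?v = "\<lambda>p. p powr ((1-sig)/th)"
  let ?R = "RC N sig M th eta ka"
  let ?e = "(2-sig)/th"
  let ?pC = "pC N sig M th C"
  let ?bs = "bs N sig M C"
  note pb = p0_bounds[OF sig th M N eta ka ne]
  have cpos: "N / (th * M powr (1-sig)) > 0" using N th M by simp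
  have deq: "d = N / (th * M powr (1-sig)) * gf sig M th eta ka (?v ?p0)"
    by (rule deriv_id[OF sig th M N eta pb(1,2) dd(1)])
  have gneg: "gf sig M th eta ka (?v ?p0) < 0"
  proof (rule ccontr)
    assume "\<not> ?thesis"
    hence "N / (th * M powr (1-sig)) * gf sig M th eta ka (?v ?p0) \<ge> 0"
      using cpos by (intro mult_nonneg_nonneg) auto
    thus False using deq dd(2) by linarith
  qed
  have dec0: "\<And>a b. ?p0 \<le> a \<Longrightarrow> a < b \<Longrightarrow> b < pmax th M \<Longrightarrow> ?R b < ?R a"
    using RC_dec[OF sig th M N eta ka bound pb(1) _ _ _ gneg] by blast
  obtain q1 where q1: "q1 \<in> ?F" using ne by blast
  have q1': "0 \<le> q1" "q1 < pmax th M" "?R q1 > 0" "PC N sig M th kp q1 \<le> C"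
    using q1 Feas_iff[OF sig th M N eta] by auto
  have p0q1: "?p0 \<le> q1" unfolding p0_def by (rule cInf_lower[OF q1 pb(3)])
  have Rp0: "?R ?p0 > 0"
  proof (cases "q1 = ?p0")
    case True thus ?thesis using q1' by simp
  next
    case False
    hence "?R q1 < ?R ?p0" using dec0[OF order_refl _ q1'(2)] p0q1 by auto
    thus ?thesis using q1' by simp
  qed
  have e0: "?e > 0" using sig th by simp
  have inv_e: "1 / ?e = th/(2-sig)" by simp
  have ge: "?bs kp \<le> ?p0 powr ?e"
  proof (cases "?bs kp > 0")
    case False
    thus ?thesis by (smt (verit) powr_ge_zero)
  next
    case True
    have "\<And>q. q \<in> ?F \<Longrightarrow> ?pC kp \<le> q" by (rule Feas_ge_pC[OF sig th M N eta C ka bound kp(1) True])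
    hence "?pC kp \<le> ?p0" unfolding p0_def by (rule cInf_greatest[OF ne])
    thus ?thesis using powr_inv_le[OF True _ e0, of ?p0] pb(1) inv_e unfolding pC_def by simp
  qed
  have eqp: "?p0 powr ?e = ?bs kp"
  proof (rule ccontr)
    assume "\<not> ?thesis"
    hence gt: "?bs kp < ?p0 powr ?e" using ge by simp
    obtain dl where dl: "dl > 0" "\<And>h. h > 0 \<Longrightarrow> h < dl \<Longrightarrow>
         Rev N sig M th eta ka ?p0 < Rev N sig M th eta ka (?p0 - h)"
      using DERIV_neg_dec_left[OF dd] by blast
    define b0 where "b0 = (if ?bs kp > 0 then ?bs kp powr (th/(2-sig)) else 0)"
    have b0: "0 \<le> b0" "b0 < ?p0" using pb(1) gt powr_inv_less[of "?bs kp" ?p0 ?e] e0 inv_e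
      by (auto simp: b0_def)
    define h where "h = min dl (?p0 - b0) / 2"
    have h: "h > 0" "h < dl" "h < ?p0 - b0" using dl b0 by (auto simp: h_def)
    define q where "q = ?p0 - h"
    have q: "0 \<le> q" "q < ?p0" "b0 < q" using h b0 by (auto simp: q_def)
    have "Rev N sig M th eta ka ?p0 < Rev N sig M th eta ka q" using dl h by (simp add: q_def)
    moreover have "Rev N sig M th eta ka ?p0 = ?R ?p0" "Rev N sig M th eta ka q = ?R q"
      using Rev_closed[OF sig th M] pb q by auto
    ultimately have Rq: "?R q > 0" using Rp0 by simp
    have "?bs kp \<le> q powr ?e"
    proof (cases "?bs kp > 0")
      case True
      hence "?bs kp powr (th/(2-sig)) < q" using q by (simp add: b0_def)
      thus ?thesis using powr_inv_less[OF True q(1) e0] inv_e by simp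
    next
      case False thus ?thesis by (smt (verit) powr_ge_zero)
    qed
    hence "q \<in> ?F" using Feas_iff[OF sig th M N eta] PCeq[OF sig th M N eta C ka bound kp(1)] q pb Rq
      by auto
    hence "?p0 \<le> q" unfolding p0_def by (rule cInf_lower[OF _ pb(3)])
    thus False using q by simp
  qed
  have bspos: "?bs kp > 0" using eqp pb(1) by (metis powr_gt_zero less_irrefl)
  have pCp0: "?pC kp = ?p0"
  proof -
    have "?pC kp = (?p0 powr ?e) powr (th/(2-sig))" unfolding pC_def eqp ..
    also have "\<dots> = ?p0" using pb(1) sig th by (simp add: powr_powr)
    finally show ?thesis .
  qed
  have Tb: "(?bs \<longlongrightarrow> ?bs kp) (at kp)"
    unfolding bs_def[abs_def] using kp by (intro tendsto_intros) auto
  have TpC: "(?pC \<longlongrightarrow> ?p0) (at kp)"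
  proof -
    have "(?pC \<longlongrightarrow> ?pC kp) (at kp)"
      unfolding pC_def[abs_def] by (rule tendsto_powr[OF Tb tendsto_const]) (use bspos in simp)
    thus ?thesis using pCp0 by simp
  qed
  have Tv: "((\<lambda>k. ?v (?pC k)) \<longlongrightarrow> ?v ?p0) (at kp)"
    by (rule tendsto_powr[OF TpC tendsto_const]) (use pb in simp)
  have Tv2: "((\<lambda>k. ?pC k powr ((2-sig)/th)) \<longlongrightarrow> ?p0 powr ((2-sig)/th)) (at kp)"
    by (rule tendsto_powr[OF TpC tendsto_const]) (use pb in simp)
  have vp0: "?v ?p0 \<noteq> 0" using pb by simp
  have Tg: "((\<lambda>k. gf sig M th eta ka (?v (?pC k))) \<longlongrightarrow> gf sig M th eta ka (?v ?p0)) (at kp)"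
    unfolding gf_def
    by (intro tendsto_add tendsto_diff tendsto_mult tendsto_const tendsto_powr[OF Tv tendsto_const] Tv vp0)
  have TR: "((\<lambda>k. ?R (?pC k)) \<longlongrightarrow> ?R ?p0) (at kp)"
    unfolding RC_def
    by (intro tendsto_add tendsto_diff tendsto_mult tendsto_const tendsto_divide Tv Tv2 TpC) (use M in simp)
  define Q where "Q k \<longleftrightarrow> k > 0 \<and> ?bs k > 0 \<and> 0 < ?pC k \<and> ?pC k < pmax th M \<and>
      gf sig M th eta ka (?v (?pC k)) < 0 \<and> ?R (?pC k) > 0" for k
  have Qkp: "Q kp" unfolding Q_def using kp bspos pCp0 pb gneg Rp0 by simp
  have evQat: "eventually Q (at kp)"
  proof -
    have "eventually (\<lambda>k. k > 0) (at kp)"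
      using order_tendstoD(1)[OF tendsto_ident_at kp(1)] .
    moreover have "eventually (\<lambda>k. ?bs k > 0) (at kp)" using order_tendstoD(1)[OF Tb bspos] .
    moreover have "eventually (\<lambda>k. ?pC k > 0) (at kp)" using order_tendstoD(1)[OF TpC pb(1)] .
    moreover have "eventually (\<lambda>k. ?pC k < pmax th M) (at kp)" using order_tendstoD(2)[OF TpC pb(2)] .
    moreover have "eventually (\<lambda>k. gf sig M th eta ka (?v (?pC k)) < 0) (at kp)"
      using order_tendstoD(2)[OF Tg gneg] .
    moreover have "eventually (\<lambda>k. ?R (?pC k) > 0) (at kp)" using order_tendstoD(1)[OF TR Rp0] .
    ultimately show ?thesis unfolding Q_def by eventually_elim auto
  qed
  have evQ: "eventually Q (nhds kp)"
    using evQat Qkp unfolding eventually_at_filter by (auto elim: eventually_mono)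
  have Qpeq: "\<And>k. Q k \<Longrightarrow> peq N sig M th eta C ka k = ?pC k"
    unfolding Q_def using peq_i[OF sig th M N eta C ka bound] by blast
  have peqkp: "peq N sig M th eta C ka kp = ?p0" using Qpeq[OF Qkp] pCp0 by simp
  define D where "D = (th/(2-sig)) * ?bs kp powr (th/(2-sig) - 1) * (Cc N sig M C / kp^2)"
  have Dpos: "D > 0" unfolding D_def using sig th bspos kp Cc_pos[OF sig th M N eta C ka bound]
    by (intro mult_pos_pos divide_pos_pos) auto
  have dpC: "(?pC has_real_derivative D) (at kp)"
    unfolding D_def by (rule pC_deriv[OF sig th M N eta C ka bound kp(1) bspos])
  have S: "kp \<in> {0<..1}" using kp by simp
  have evS: "eventually (\<lambda>x. x \<in> {0<..1} \<longrightarrow> peq N sig M th eta C ka x = ?pC x) (nhds kp)"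
    using evQ by (auto elim: eventually_mono simp: Qpeq)
  have D1: "((\<lambda>k. peq N sig M th eta C ka k) has_real_derivative D) (at kp within {0<..1})"
    using has_field_derivative_cong_ev[OF refl evS refl refl S] has_field_derivative_at_within[OF dpC]
    by simp
  have dd1: "(Rev N sig M th eta ka has_real_derivative d) (at (?pC kp))" using dd(1) pCp0 by simp
  have evS2: "eventually (\<lambda>x. x \<in> {0<..1} \<longrightarrow> Rev N sig M th eta ka (peq N sig M th eta C ka x)
                 = Rev N sig M th eta ka (?pC x)) (nhds kp)"
    using evQ by (auto elim: eventually_mono simp: Qpeq)
  have D2: "((\<lambda>k. Rev N sig M th eta ka (peq N sig M th eta C ka k)) has_real_derivative d * D)
              (at kp within {0<..1})"
    using has_field_derivative_cong_ev[OF refl evS2 refl refl S]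
      DERIV_chain2[OF dd1 has_field_derivative_at_within[OF dpC]]
    by simp
  have dD: "d * D < 0" using dd(2) Dpos by (simp add: mult_neg_pos)
  have evL: "\<forall>\<^sub>F k in at_left kp. Q k \<and> k \<in> {0<..<kp}"
  proof -
    have "at_left kp \<le> nhds kp" by (simp add: at_within_def)
    from filter_leD[OF this evQ] eventually_at_left_real[OF kp(1)]
    show ?thesis by eventually_elim auto
  qed
  have main: "\<forall>\<^sub>F k in at_left kp. peq N sig M th eta C ka k < ?p0 \<and>
      USurp N sig M th (peq N sig M th eta C ka k) > USurp N sig M th ?p0 \<and>
      Rev N sig M th eta ka (peq N sig M th eta C ka k) > Rev N sig M th eta ka ?p0"
    using evL
  proof eventually_elim
    case (elim k)
    hence Qk: "Q k" and k: "0 < k" "k < kp" by auto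
    have pk: "peq N sig M th eta C ka k = ?pC k" by (rule Qpeq[OF Qk])
    have Qk': "?bs k > 0" "0 < ?pC k" "?pC k < pmax th M" "gf sig M th eta ka (?v (?pC k)) < 0"
      using Qk unfolding Q_def by auto
    have lt: "?pC k < ?p0" using pC_mono[OF sig th M N eta C ka bound k Qk'(1)] pCp0 by simp
    have "UC N sig M th ?p0 < UC N sig M th (?pC k)"
      by (rule UC_dec[OF sig th M N eta]) (use Qk' lt pb in auto)
    moreover have "USurp N sig M th (?pC k) = UC N sig M th (?pC k)" "USurp N sig M th ?p0 = UC N sig M th ?p0"
      using USurp_closed[OF sig th M] Qk' pb by auto
    moreover have "?R ?p0 < ?R (?pC k)"
      by (rule RC_dec[OF sig th M N eta ka bound Qk'(2) order_refl lt pb(2) Qk'(4)])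
    moreover have "Rev N sig M th eta ka (?pC k) = ?R (?pC k)" "Rev N sig M th eta ka ?p0 = ?R ?p0"
      using Rev_closed[OF sig th M] Qk' pb by auto
    ultimately show ?case using pk lt by simp
  qed
  have A3: "\<forall>x. 0 \<le> x \<and> x \<le> M \<and> x powr th - peq N sig M th eta C ka kp > 0 \<longrightarrow>
             (\<forall>\<^sub>F k in at_left kp. x powr th - peq N sig M th eta C ka k
                                     > x powr th - peq N sig M th eta C ka kp)"
    using main peqkp by (auto elim: eventually_mono)
  have A4: "\<forall>\<^sub>F k in at_left kp. USurp N sig M th (peq N sig M th eta C ka k)
                                > USurp N sig M th (peq N sig M th eta C ka kp)"
    using main peqkp by (auto elim: eventually_mono)
  have A5: "\<forall>\<^sub>F k in at_left kp. SWelf N sig M th eta ka (peq N sig M th eta C ka k)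
                                > SWelf N sig M th eta ka (peq N sig M th eta C ka kp)"
    using main by eventually_elim (auto simp: SWelf_def peqkp)
  show ?thesis using D1 Dpos D2 dD A3 A4 A5 by blast
qed

end

theorem theorem1:
  fixes N C sig M th eta ka kp :: real
  assumes hN: "N > 0" and hC: "C > 0"
    and hsig: "0 < sig" "sig < 1"
    and hth: "0 < th" "th < 1"
    and hM: "M > 0" and heta: "eta > 0"
    and hka: "0 < ka" "ka \<le> 1"
    and hkp: "0 < kp" "kp \<le> 1"
    and heta_bound: "eta < 1 / (ka * M powr (1 - th))"
    and hfeas: "Feas N sig M th eta C ka kp \<noteq> {}"
  shows
    "((\<exists>d. (Rev N sig M th eta ka has_real_derivative d) (at (p0 N sig M th eta C ka kp)) \<and> d < 0) \<longrightarrow>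
        (\<exists>D > 0. ((\<lambda>k. peq N sig M th eta C ka k) has_real_derivative D) (at kp within {0<..1})) \<and>
        (\<exists>D < 0. ((\<lambda>k. Rev N sig M th eta ka (peq N sig M th eta C ka k)) has_real_derivative D)
                    (at kp within {0<..1})) \<and>
        (\<forall>x. 0 \<le> x \<and> x \<le> M \<and> x powr th - peq N sig M th eta C ka kp > 0 \<longrightarrow>
             (\<forall>\<^sub>F k in at_left kp. x powr th - peq N sig M th eta C ka k
                                     > x powr th - peq N sig M th eta C ka kp)) \<and>
        (\<forall>\<^sub>F k in at_left kp. USurp N sig M th (peq N sig M th eta C ka k)
                                > USurp N sig M th (peq N sig M th eta C ka kp)) \<and>
        (\<forall>\<^sub>F k in at_left kp. SWelf N sig M th eta ka (peq N sig M th eta C ka k)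
                                > SWelf N sig M th eta ka (peq N sig M th eta C ka kp)))
     \<and>
     ((\<exists>d. (Rev N sig M th eta ka has_real_derivative d) (at (p0 N sig M th eta C ka kp)) \<and> d > 0) \<longrightarrow>
        (\<forall>\<^sub>F k in at_left ka. peq N sig M th eta C k kp < peq N sig M th eta C ka kp) \<and>
        (\<forall>x. 0 \<le> x \<and> x \<le> M \<and> x powr th - peq N sig M th eta C ka kp > 0 \<longrightarrow>
             (\<forall>\<^sub>F k in at_left ka. x powr th - peq N sig M th eta C k kp
                                     > x powr th - peq N sig M th eta C ka kp)) \<and>
        (\<forall>\<^sub>F k in at_left ka. MaxRev N sig M th eta C k kp > MaxRev N sig M th eta C ka kp) \<and>
        (\<forall>\<^sub>F k in at_left ka. USurp N sig M th (peq N sig M th eta C k kp)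
                                > USurp N sig M th (peq N sig M th eta C ka kp)) \<and>
        (\<forall>\<^sub>F k in at_left ka. SWelf N sig M th eta k (peq N sig M th eta C k kp)
                                > SWelf N sig M th eta ka (peq N sig M th eta C ka kp)))"
  proof (intro conjI impI)
  assume "\<exists>d. (Rev N sig M th eta ka has_real_derivative d) (at (p0 N sig M th eta C ka kp)) \<and> d < 0"
  then obtain d where dd: "(Rev N sig M th eta ka has_real_derivative d) (at (p0 N sig M th eta C ka kp))" "d < 0"
    by blast
  note R = case_i[OF hsig hth hM hN heta hC hka(1) heta_bound hkp hfeas dd]
  show "\<exists>D > 0. ((\<lambda>k. peq N sig M th eta C ka k) has_real_derivative D) (at kp within {0<..1})"
    using R by blast
  show "\<exists>D < 0. ((\<lambda>k. Rev N sig M th eta ka (peq N sig M th eta C ka k)) has_real_derivative D)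
                    (at kp within {0<..1})" using R by blast
  show "\<forall>x. 0 \<le> x \<and> x \<le> M \<and> x powr th - peq N sig M th eta C ka kp > 0 \<longrightarrow>
             (\<forall>\<^sub>F k in at_left kp. x powr th - peq N sig M th eta C ka k
                                     > x powr th - peq N sig M th eta C ka kp)" using R by blast
  show "\<forall>\<^sub>F k in at_left kp. USurp N sig M th (peq N sig M th eta C ka k)
                                > USurp N sig M th (peq N sig M th eta C ka kp)" using R by blast
  show "\<forall>\<^sub>F k in at_left kp. SWelf N sig M th eta ka (peq N sig M th eta C ka k)
                                > SWelf N sig M th eta ka (peq N sig M th eta C ka kp)" using R by blast
next
  assume "\<exists>d. (Rev N sig M th eta ka has_real_derivative d) (at (p0 N sig M th eta C ka kp)) \<and> d > 0"
  then obtain d where dd: "(Rev N sig M th eta ka has_real_derivative d) (at (p0 N sig M th eta C ka kp))" "d > 0"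
    by blast
  note R = case_ii[OF hsig hth hM hN heta hkp(1) hka(1) heta_bound hfeas dd]
  show "\<forall>\<^sub>F k in at_left ka. peq N sig M th eta C k kp < peq N sig M th eta C ka kp" using R by blast
  show "\<forall>x. 0 \<le> x \<and> x \<le> M \<and> x powr th - peq N sig M th eta C ka kp > 0 \<longrightarrow>
             (\<forall>\<^sub>F k in at_left ka. x powr th - peq N sig M th eta C k kp
                                     > x powr th - peq N sig M th eta C ka kp)" using R by blast
  show "\<forall>\<^sub>F k in at_left ka. MaxRev N sig M th eta C k kp > MaxRev N sig M th eta C ka kp" using R by blast
  show "\<forall>\<^sub>F k in at_left ka. USurp N sig M th (peq N sig M th eta C k kp)
                                > USurp N sig M th (peq N sig M th eta C ka kp)" using R by blast
  show "\<forall>\<^sub>F k in at_left ka. SWelf N sig M th eta k (peq N sig M th eta C k kp)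
                                > SWelf N sig M th eta ka (peq N sig M th eta C ka kp)" using R by blast
qed

end
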